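(* Let $n\ge 1$ and let $J=\begin{pmatrix}0 & I_n\\ -I_n & 0\end{pmatrix}\in\mathbb{R}^{2n\times 2n}$. Let $L\in\mathbb{C}^{2n\times 2n}$ be a complex symmetric matrix ($L=L^T$) such that $J^{-1}L$ is diagonalizable. Then there exist invertible matrices $P,Q\in \mathrm{GL}(2n,\mathbb{C})$ and a diagonal matrix $\Lambda=\mathrm{diag}(\lambda_1,\dots,\lambda_n)\in\mathbb{C}^{n\times n}$ such that $$PLQ=\begin{pmatrix}0&\Lambda\\ \Lambda&0\end{pmatrix}\qquad\text{and}\qquad PJQ=J.$$ In particular, the eigenvalues of $J^{-1}L$ (counted with multiplicity) come in pairs $\pm\lambda_i$, $i=1,\dots,n$.
   Context: $I_n$ denotes the $n\times n$ identity matrix and $J$ is the standard symplectic form, which satisfies $J^T=J^{-1}=-J$. Transposition $^T$ is the ordinary (non-conjugating) transpose. *)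

theory Defs
  imports "Jordan_Normal_Form.Matrix" "Jordan_Normal_Form.Char_Poly"
begin

definition symp_J :: "nat \<Rightarrow> complex mat" where
  "symp_J n = four_block_mat (0\<^sub>m n n) (1\<^sub>m n) (- 1\<^sub>m n) (0\<^sub>m n n)"

definition diagonalizable :: "complex mat \<Rightarrow> bool" where
  "diagonalizable A \<longleftrightarrow> (\<exists>D. diagonal_mat D \<and> similar_mat A D)"

definition diag_of :: "nat \<Rightarrow> (nat \<Rightarrow> complex) \<Rightarrow> complex mat" where
  "diag_of n lam = mat n n (\<lambda>(i,j). if i = j then lam i else 0)"

end

theory Submission
  imports Defs
begin


lemma order_prod_lin:
  "order c (\<Prod>a\<leftarrow>ds. [:- a, 1:]) = count (mset ds) (c::complex)"
proof (induction ds)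
  case Nil
  then show ?case by simp
next
  case (Cons a ds)
  have nz: "(\<Prod>a\<leftarrow>ds. [:- a, 1:]) \<noteq> (0::complex poly)"
  proof -
    have "0 \<notin> set (map (\<lambda>a. [:- a, 1:]) ds)" by auto
    then show ?thesis by (metis prod_list_zero_iff)
  qed
  have "order c ([:- a, 1:] * (\<Prod>a\<leftarrow>ds. [:- a, 1:])) = order c [:- a, 1:] + order c (\<Prod>a\<leftarrow>ds. [:- a, 1:])"
    by (rule order_mult, rule no_zero_divisors) (simp, fact nz)
  moreover have "order c [:- a, 1:] = (if a = c then 1 else 0)"
  proof (cases "a = c")
    case True
    then show ?thesis using order_power_n_n[of c 1] by simp
  next
    case False
    have "order c [:-a,1:] = 0" by (rule order_0I) (use False in simp)
    with False show ?thesis by simp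
  qed
  ultimately show ?case using Cons by simp
qed

lemma pairing:
  fixes M :: "complex multiset"
  assumes "image_mset uminus M = M" "even (size M)"
  shows "\<exists>xs. M = mset xs + mset (map uminus xs)"
  using assms
proof (induction "size M" arbitrary: M rule: less_induct)
  case less
  show ?case
  proof (cases "\<exists>x. x \<in># M \<and> x \<noteq> 0")
    case True
    then obtain x where x: "x \<in># M" "x \<noteq> 0" by blast
    have "-x \<in># image_mset uminus M" using x(1) by simp
    then have c: "-x \<in># M" using less.prems(1) by simp
    have "-x \<noteq> x" using x(2) by simp
    then have mx: "-x \<in># M - {#x#}" using c by (simp add: in_diff_count)
    define M' where "M' = M - {#x#} - {#-x#}"
    have MM: "M = M' + {#x, -x#}"
    proof -
      have "M = add_mset x (M - {#x#})" using x(1) by simp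
      also have "M - {#x#} = add_mset (-x) (M - {#x#} - {#-x#})" by (rule insert_DiffM[OF mx, symmetric])
      finally show ?thesis unfolding M'_def by simp
    qed
    have i1: "image_mset uminus M = image_mset uminus M' + {#x, -x#}" using MM by (simp add: add_mset_commute)
    have "image_mset uminus M' + {#x, -x#} = M' + {#x, -x#}"
      using less.prems(1) MM i1 by simp
    then have s: "image_mset uminus M' = M'" by (rule add_right_imp_eq)
    have sz: "size M = size M' + 2" using MM by simp
    obtain xs where "M' = mset xs + mset (map uminus xs)"
      using less.hyps[of M'] s sz less.prems(2) by auto
    then have "M = mset (x#xs) + mset (map uminus (x#xs))" using MM by simp
    then show ?thesis by blast
  next
    case False
    then have "set_mset M \<subseteq> {0}" by auto
    then have M: "M = replicate_mset (size M) 0"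
      by (metis set_mset_subset_singletonD)
    obtain k where k: "size M = 2*k" using less.prems(2) by auto
    have "M = mset (replicate k 0) + mset (map uminus (replicate k (0::complex)))"
    proof -
      have M2: "M = replicate_mset (2*k) 0" using M k by metis
      show ?thesis by (subst M2) (simp add: multiset_eq_iff)
    qed
    then show ?thesis by blast
  qed
qed



lemma diag_perm_similar:
  fixes D1 D2 :: "complex mat"
  assumes D1: "D1 \<in> carrier_mat N N" and D2: "D2 \<in> carrier_mat N N"
    and dg1: "diagonal_mat D1" and dg2: "diagonal_mat D2"
    and ms: "mset (diag_mat D1) = mset (diag_mat D2)"
  shows "similar_mat D1 D2"
proof -
  have len: "length (diag_mat D2) = N" using D2 by (simp add: diag_mat_def)
  obtain p where p: "p permutes {..<N}" "permute_list p (diag_mat D2) = diag_mat D1"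
    using mset_eq_permutation[OF ms] len by metis
  have pin: "\<And>i. i < N \<Longrightarrow> p i < N" using p(1) permutes_in_image by fastforce
  have pinj: "\<And>i k. p i = p k \<longleftrightarrow> i = k" using p(1) permutes_inj by (metis injD)
  have d: "D1 $$ (i,i) = D2 $$ (p i, p i)" if i: "i < N" for i
  proof -
    have "diag_mat D1 ! i = permute_list p (diag_mat D2) ! i" using p(2) by simp
    also have "\<dots> = diag_mat D2 ! p i" using permute_list_nth[of p "diag_mat D2" i] p(1) i len by simp
    finally show ?thesis using i pin[OF i] D1 D2 by (simp add: diag_mat_def)
  qed
  define P :: "complex mat" where "P = mat N N (\<lambda>(i,j). if p i = j then 1 else 0)"
  define Q :: "complex mat" where "Q = mat N N (\<lambda>(i,j). if i = p j then 1 else 0)"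
  have P: "P \<in> carrier_mat N N" and Q: "Q \<in> carrier_mat N N" unfolding P_def Q_def by auto
  have PQ: "P * Q = 1\<^sub>m N"
  proof (rule eq_matI)
    fix i k assume i: "i < dim_row (1\<^sub>m N)" and k: "k < dim_col (1\<^sub>m N)"
    have "(P * Q) $$ (i,k) = (\<Sum>j\<in>{0..<N}. (if p i = j then 1 else 0) * (if j = p k then 1 else 0))"
      using i k unfolding P_def Q_def by (simp add: scalar_prod_def)
    also have "\<dots> = (\<Sum>j\<in>{0..<N}. if p i = j then (if j = p k then 1 else 0) else 0)"
      by (rule sum.cong) auto
    also have "\<dots> = (if p i = p k then 1 else 0)" using pin i by (simp add: sum.delta)
    finally show "(P * Q) $$ (i,k) = 1\<^sub>m N $$ (i,k)" using i k pinj by simp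
  qed (use P Q in auto)
  have QP: "Q * P = 1\<^sub>m N" by (rule mat_mult_left_right_inverse[OF P Q PQ])
  have PD: "(P * D2) $$ (i,l) = D2 $$ (p i, l)" if "i < N" "l < N" for i l
  proof -
    have "(P * D2) $$ (i,l) = (\<Sum>j\<in>{0..<N}. (if p i = j then 1 else 0) * D2 $$ (j,l))"
      using that D2 unfolding P_def by (simp add: scalar_prod_def)
    also have "\<dots> = (\<Sum>j\<in>{0..<N}. if p i = j then D2 $$ (j,l) else 0)"
      by (rule sum.cong) auto
    also have "\<dots> = D2 $$ (p i, l)" using pin that by (simp add: sum.delta)
    finally show ?thesis .
  qed
  have PDQ: "D1 = P * D2 * Q"
  proof (rule eq_matI)
    fix i k assume i: "i < dim_row (P * D2 * Q)" and k: "k < dim_col (P * D2 * Q)"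
    then have i: "i < N" and k: "k < N" using P Q by auto
    have "(P * D2 * Q) $$ (i,k) = (\<Sum>l\<in>{0..<N}. (P * D2) $$ (i,l) * (if l = p k then 1 else 0))"
      using i k P D2 unfolding Q_def by (simp add: scalar_prod_def)
    also have "\<dots> = (\<Sum>l\<in>{0..<N}. if l = p k then (P * D2) $$ (i,l) else 0)"
      by (rule sum.cong) auto
    also have "\<dots> = (P * D2) $$ (i, p k)" using pin k by (simp add: sum.delta')
    also have "\<dots> = D2 $$ (p i, p k)" using PD i pin k by simp
    also have "\<dots> = D1 $$ (i,k)"
    proof (cases "i = k")
      case True then show ?thesis using d i by simp
    next
      case False
      then have "p i \<noteq> p k" using pinj by simp
      then show ?thesis using dg1 dg2 D1 D2 i k pin False unfolding diagonal_mat_def by auto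
    qed
    finally show "D1 $$ (i,k) = (P * D2 * Q) $$ (i,k)" by simp
  qed (use D1 P Q in auto)
  show ?thesis by (rule similar_matI[where n=N and P=P and Q=Q]) (use D1 D2 P Q PQ QP PDQ in auto)
qed



lemma J_carrier: "symp_J n \<in> carrier_mat (2*n) (2*n)"
  unfolding symp_J_def mult_2 by (rule four_block_carrier_mat) auto

lemma J_J: "symp_J n * symp_J n = - 1\<^sub>m (2*n)"
proof -
  have "symp_J n * symp_J n = four_block_mat (0\<^sub>m n n * 0\<^sub>m n n + 1\<^sub>m n * - 1\<^sub>m n) (0\<^sub>m n n * 1\<^sub>m n + 1\<^sub>m n * 0\<^sub>m n n)
    (- 1\<^sub>m n * 0\<^sub>m n n + 0\<^sub>m n n * - 1\<^sub>m n) (- 1\<^sub>m n * 1\<^sub>m n + 0\<^sub>m n n * 0\<^sub>m n n)"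
    unfolding symp_J_def by (rule mult_four_block_mat) auto
  also have "\<dots> = - 1\<^sub>m (2*n)" by (rule eq_matI) auto
  finally show ?thesis .
qed

lemma J_T: "transpose_mat (symp_J n) = - symp_J n"
  unfolding symp_J_def by (rule eq_matI) auto

lemma neg_similar: assumes "similar_mat X (Y :: complex mat)" shows "similar_mat (-X) (-Y)"
proof -
  obtain m P Q where "{X, Y, P, Q} \<subseteq> carrier_mat m m" "P * Q = 1\<^sub>m m" "Q * P = 1\<^sub>m m" "X = P * Y * Q"
    using similar_matD[OF assms] by blast
  then show ?thesis by (intro similar_matI[where n=m and P=P and Q=Q]) auto
qed


lemma diag_mult_entry:
  fixes f :: "nat \<Rightarrow> complex"
  assumes B: "B \<in> carrier_mat N M" and i: "i < N" and k: "k < M"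
  shows "(mat N N (\<lambda>(i,j). if i = j then f i else 0) * B) $$ (i,k) = f i * B $$ (i,k)"
proof -
  have "(mat N N (\<lambda>(i,j). if i = j then f i else 0) * B) $$ (i,k)
      = (\<Sum>j\<in>{0..<N}. (if i = j then f i else 0) * B $$ (j,k))"
    using B i k by (simp add: scalar_prod_def)
  also have "\<dots> = (\<Sum>j\<in>{0..<N}. if i = j then f i * B $$ (j,k) else 0)"
    by (rule sum.cong) auto
  also have "\<dots> = f i * B $$ (i,k)" using i by (simp add: sum.delta)
  finally show ?thesis .
qed

lemma diag_upper: assumes "diagonal_mat D" "D \<in> carrier_mat N N" shows "upper_triangular D"
  using assms unfolding diagonal_mat_def upper_triangular_def by auto

lemma prod_list_nth_conv: "(\<Prod>a\<leftarrow>xs. g a) = (\<Prod>i<length xs. g (xs ! i))"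
  by (subst prod.list_conv_set_nth) (simp add: lessThan_atLeast0)

theorem lemma1:
  fixes n :: nat and L :: "complex mat"
  assumes "n \<ge> 1"
    and "L \<in> carrier_mat (2*n) (2*n)"
    and "transpose_mat L = L"
    and "diagonalizable ((- symp_J n) * L)"
  shows "\<exists>P Q lam.
           P \<in> carrier_mat (2*n) (2*n) \<and> Q \<in> carrier_mat (2*n) (2*n) \<and>
           invertible_mat P \<and> invertible_mat Q \<and>
           P * L * Q = four_block_mat (0\<^sub>m n n) (diag_of n lam) (diag_of n lam) (0\<^sub>m n n) \<and>
           P * symp_J n * Q = symp_J n \<and>
           char_poly ((- symp_J n) * L) = (\<Prod>i<n. [:- lam i, 1:] * [:lam i, 1:])"
proof -
  define N where "N = 2*n"
  define J where "J = symp_J n"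
  define K where "K = - J"
  define A where "A = K * L"
  have J: "J \<in> carrier_mat N N" unfolding J_def N_def by (rule J_carrier)
  have K: "K \<in> carrier_mat N N" unfolding K_def using J by simp
  have L: "L \<in> carrier_mat N N" using assms(2) unfolding N_def .
  have A: "A \<in> carrier_mat N N" unfolding A_def using K L by simp
  have JJ: "J * J = - 1\<^sub>m N" unfolding J_def N_def by (rule J_J)
  have JK: "J * K = 1\<^sub>m N" unfolding K_def using JJ uminus_mult_right_mat[of J J] J by simp
  have KJ: "K * J = 1\<^sub>m N" unfolding K_def using JJ uminus_mult_left_mat[of J J] J by simp
  obtain D where Dd: "diagonal_mat D" and AD: "similar_mat A D"
    using assms(4) unfolding diagonalizable_def A_def K_def J_def by blast
  have D: "D \<in> carrier_mat N N"
    using similar_matD[OF AD] A by auto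
  have s1: "similar_mat (J * A * K) A"
    by (rule similar_matI[where n=N and P=J and Q=K]) (use J K A JK KJ in auto)
  have JAK: "J * A * K = L * K"
  proof -
    have "J * A * K = J * (K * L) * K" unfolding A_def ..
    also have "J * (K * L) = (J * K) * L" using J K L by simp
    also have "\<dots> = L" using JK L by simp
    finally show ?thesis .
  qed
  have "L * K = - (L * J)" unfolding K_def using uminus_mult_right_mat[of L J] L J by simp
  then have LJ: "L * J = - (J * A * K)" unfolding JAK by simp
  have s2: "similar_mat (L * J) (-D)"
    unfolding LJ by (rule neg_similar, rule similar_mat_trans[OF s1 AD])
  have AT: "transpose_mat A = L * J"
    unfolding A_def using transpose_mult[OF K L] assms(3) J_T[of n]
    unfolding K_def J_def by (simp add: transpose_uminus)
  have cp: "char_poly D = char_poly (-D)"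
  proof -
    have "char_poly D = char_poly A" by (rule char_poly_similar[OF similar_mat_sym[OF AD]])
    also have "\<dots> = char_poly (transpose_mat A)" using A by simp
    also have "\<dots> = char_poly (-D)" unfolding AT by (rule char_poly_similar[OF s2])
    finally show ?thesis .
  qed
  define ds where "ds = diag_mat D"
  have lends: "length ds = N" unfolding ds_def diag_mat_def using D by simp
  have dneg: "diag_mat (-D) = map uminus ds" unfolding ds_def diag_mat_def using D by auto
  have prods: "(\<Prod>a\<leftarrow>ds. [:- a, 1:]) = (\<Prod>a\<leftarrow>map uminus ds. [:- a, 1:])"
  proof -
    have "char_poly D = (\<Prod>a\<leftarrow>ds. [:- a, 1:])"
      unfolding ds_def by (rule char_poly_upper_triangular[OF D diag_upper[OF Dd D]])
    moreover have "char_poly (-D) = (\<Prod>a\<leftarrow>diag_mat (-D). [:- a, 1:])"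
      by (rule char_poly_upper_triangular[of _ N]) (use D Dd in \<open>auto simp: diagonal_mat_def upper_triangular_def\<close>)
    ultimately show ?thesis using cp dneg by simp
  qed
  have msym: "mset ds = mset (map uminus ds)"
  proof (rule multiset_eqI)
    fix c
    show "count (mset ds) c = count (mset (map uminus ds)) c"
      using order_prod_lin[of c ds] order_prod_lin[of c "map uminus ds"] prods by simp
  qed
  have "image_mset uminus (mset ds) = mset ds" using msym by simp
  moreover have "even (size (mset ds))" using lends unfolding N_def by simp
  ultimately obtain xs where xs: "mset ds = mset xs + mset (map uminus xs)"
    using pairing by blast
  have lenxs: "length xs = n"
  proof -
    have "size (mset ds) = 2 * length xs" using xs by simp
    then show ?thesis using lends unfolding N_def by simp
  qed
  define lam where "lam i = xs ! i" for i
  define f where "f i = (if i < n then lam i else - lam (i - n))" for i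
  define D' where "D' = mat N N (\<lambda>(i,j). if i = j then f i else 0)"
  have D': "D' \<in> carrier_mat N N" unfolding D'_def by simp
  have Dd': "diagonal_mat D'" unfolding D'_def diagonal_mat_def by auto
  have diagD': "diag_mat D' = xs @ map uminus xs"
  proof (rule nth_equalityI)
    show "length (diag_mat D') = length (xs @ map uminus xs)"
      using lenxs unfolding D'_def diag_mat_def N_def by simp
    fix i assume "i < length (diag_mat D')"
    then have i: "i < N" unfolding D'_def diag_mat_def by simp
    then show "diag_mat D' ! i = (xs @ map uminus xs) ! i"
      using lenxs unfolding D'_def diag_mat_def f_def lam_def N_def by (auto simp: nth_append)
  qed
  have "similar_mat D D'"
    by (rule diag_perm_similar[OF D D' Dd Dd']) (use xs diagD' ds_def in simp)
  then have AD': "similar_mat A D'" by (rule similar_mat_trans[OF AD])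
  obtain m S T where ST: "{A, D', S, T} \<subseteq> carrier_mat m m" "S * T = 1\<^sub>m m" "T * S = 1\<^sub>m m" "A = S * D' * T"
    using similar_matD[OF AD'] by blast
  have m: "m = N" using ST(1) A by auto
  have S: "S \<in> carrier_mat N N" and T: "T \<in> carrier_mat N N" using ST(1) m by auto
  have STN: "S * T = 1\<^sub>m N" "T * S = 1\<^sub>m N" using ST m by auto
  define P where "P = T * K"
  define Q where "Q = S * J"
  have P: "P \<in> carrier_mat N N" unfolding P_def using T K by simp
  have Q: "Q \<in> carrier_mat N N" unfolding Q_def using S J by simp
  note ass = assoc_mult_mat[of _ N N _ N _ N] mult_carrier_mat[of _ N N _ N]
  have canc: "K * (J * W) = W" "J * (K * W) = W" "S * (T * W) = W" "T * (S * W) = W"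
    if W: "W \<in> carrier_mat N N" for W
  proof -
    have "K * (J * W) = (K * J) * W" using K J W by simp
    then show "K * (J * W) = W" using KJ W by simp
    have "J * (K * W) = (J * K) * W" using K J W by simp
    then show "J * (K * W) = W" using JK W by simp
    have "S * (T * W) = (S * T) * W" using S T W by simp
    then show "S * (T * W) = W" using STN W by simp
    have "T * (S * W) = (T * S) * W" using S T W by simp
    then show "T * (S * W) = W" using STN W by simp
  qed
  have PJQ: "P * J * Q = J"
    unfolding P_def Q_def using T K J S by (simp add: ass canc)
  have TAS: "T * A * S = D'"
    unfolding ST(4) using T S D' STN by (simp add: ass canc)
  have PLQ: "P * L * Q = D' * J"
  proof -
    have "P * L * Q = (T * A * S) * J" unfolding P_def Q_def A_def using T K L S J by (simp add: ass)
    then show ?thesis using TAS by simp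
  qed
  have DJ: "D' * J = four_block_mat (0\<^sub>m n n) (diag_of n lam) (diag_of n lam) (0\<^sub>m n n)"
  proof (rule eq_matI)
    fix i k assume "i < dim_row (four_block_mat (0\<^sub>m n n) (diag_of n lam) (diag_of n lam) (0\<^sub>m n n))"
      "k < dim_col (four_block_mat (0\<^sub>m n n) (diag_of n lam) (diag_of n lam) (0\<^sub>m n n))"
    then have i: "i < N" and k: "k < N" unfolding N_def diag_of_def by auto
    have "(D' * J) $$ (i,k) = f i * J $$ (i,k)"
      unfolding D'_def by (rule diag_mult_entry[OF J i k])
    then show "(D' * J) $$ (i,k) = four_block_mat (0\<^sub>m n n) (diag_of n lam) (diag_of n lam) (0\<^sub>m n n) $$ (i,k)"
      using i k unfolding J_def symp_J_def f_def diag_of_def N_def by auto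
  qed (use D' J in \<open>auto simp: N_def diag_of_def\<close>)
  have invP: "invertible_mat P"
    unfolding invertible_mat_def inverts_mat_def
  proof (intro conjI exI)
    show "square_mat P" using P by simp
    show "P * (J * S) = 1\<^sub>m (dim_row P)" unfolding P_def using KJ STN P T S K J by (simp add: ass canc)
    show "J * S * P = 1\<^sub>m (dim_row (J * S))" unfolding P_def using JK STN J K S T by (simp add: ass canc)
  qed
  have invQ: "invertible_mat Q"
    unfolding invertible_mat_def inverts_mat_def
  proof (intro conjI exI)
    show "square_mat Q" using Q by simp
    show "Q * (K * T) = 1\<^sub>m (dim_row Q)" unfolding Q_def using JK STN Q T S K J by (simp add: ass canc)
    show "K * T * Q = 1\<^sub>m (dim_row (K * T))" unfolding Q_def using KJ STN J K T S by (simp add: ass canc)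
  qed
  have cpA: "char_poly A = (\<Prod>i<n. [:- lam i, 1:] * [:lam i, 1:])"
  proof -
    have "char_poly A = char_poly D'" by (rule char_poly_similar[OF AD'])
    also have "\<dots> = (\<Prod>a\<leftarrow>xs @ map uminus xs. [:- a, 1:])"
      unfolding diagD'[symmetric] by (rule char_poly_upper_triangular[OF D' diag_upper[OF Dd' D']])
    also have "\<dots> = (\<Prod>a\<leftarrow>xs. [:- a, 1:]) * (\<Prod>a\<leftarrow>xs. [:a, 1:])" by (simp add: comp_def)
    also have "\<dots> = (\<Prod>i<n. [:- lam i, 1:]) * (\<Prod>i<n. [:lam i, 1:])"
      unfolding prod_list_nth_conv lenxs lam_def ..
    also have "\<dots> = (\<Prod>i<n. [:- lam i, 1:] * [:lam i, 1:])" by (rule prod.distrib[symmetric])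
    finally show ?thesis .
  qed
  show ?thesis
    apply (rule exI[of _ P], rule exI[of _ Q], rule exI[of _ lam])
    using P Q invP invQ PLQ DJ PJQ cpA unfolding N_def J_def A_def K_def by simp
qed

end
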